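(* Let $p=p(n)$ with $p/n\to y\in(0,\infty)$. For each $n$ let $\{x_{i,n}\}_i$ be i.i.d. with all moments finite, and suppose that for every $k\ge1$, $n\,\mathbb E[x_{0,n}^k]\to C_k$ as $n\to\infty$, where, with $C'_{2k}=|C_{2k}|$ and $C'_{2k-1}=0$, the numbers $\alpha_k=\sum_{\sigma\in\mathcal P(2k)}\prod_{V\in\sigma}C'_{|V|}$ satisfy $\sum_k\alpha_{2k}^{-1/(2k)}=\infty$. For each of the link functions $L\in\{L_T,L_{H^{(s)}},L_{R^{(s)}},L_C\}$ let $\mu_L$ denote the weak limit of the EESD of $A_LA_L^T$, where $A_L$ is the $p\times n$ matrix with entries $x_{L(i,j),n}$ (these limits exist by Theorem 2.2). Then $\mu_{L_T}=\mu_{L_{H^{(s)}}}$ and $\mu_{L_{R^{(s)}}}=\mu_{L_C}$.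
   Context: Link functions ($1\le i\le p$, $1\le j\le n$): $L_T(i,j)=i-j$; $L_{H^{(s)}}(i,j)=i+j$; $L_{R^{(s)}}(i,j)=(i+j-2)\bmod n$; $L_C(i,j)=(j-i)\bmod n$. $\mathcal P(2k)$ is the set of partitions of $\{1,\dots,2k\}$. EESD of a $p\times p$ symmetric random matrix: $B\mapsto\mathbb E[\frac1p\#\{\text{eigenvalues in }B\}]$. *)

theory Defs
  imports "HOL-Probability.Probability" "Jordan_Normal_Form.Char_Poly"
begin

text \<open>Link functions (1-based indices i in 1..p, j in 1..n); the parameter n is the
  number of columns, needed for the circulant-type links.\<close>

definition link_T :: "nat \<Rightarrow> nat \<Rightarrow> nat \<Rightarrow> int" where
  "link_T n i j = int i - int j"

definition link_H :: "nat \<Rightarrow> nat \<Rightarrow> nat \<Rightarrow> int" where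
  "link_H n i j = int i + int j"

definition link_R :: "nat \<Rightarrow> nat \<Rightarrow> nat \<Rightarrow> int" where
  "link_R n i j = (int i + int j - 2) mod int n"

definition link_C :: "nat \<Rightarrow> nat \<Rightarrow> nat \<Rightarrow> int" where
  "link_C n i j = (int j - int i) mod int n"

text \<open>The p x n matrix with (i,j) entry x (L(i,j)); Jordan_Normal_Form matrices are
  0-based, so entry (i,j) corresponds to the paper's (i+1,j+1).\<close>

definition link_matrix :: "nat \<Rightarrow> nat \<Rightarrow> (nat \<Rightarrow> nat \<Rightarrow> nat \<Rightarrow> int) \<Rightarrow> (int \<Rightarrow> real) \<Rightarrow> real mat" where
  "link_matrix p n L x = mat p n (\<lambda>(i, j). x (L n (i + 1) (j + 1)))"

definition eig_count :: "real mat \<Rightarrow> real set \<Rightarrow> nat" where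
  "eig_count A B = (\<Sum>t\<in>{t. poly (char_poly A) t = 0} \<inter> B. order t (char_poly A))"

definition EESD :: "'a measure \<Rightarrow> ('a \<Rightarrow> real mat) \<Rightarrow> nat \<Rightarrow> real measure" where
  "EESD M Y p = measure_of UNIV (sets borel)
      (\<lambda>B. \<integral>\<^sup>+ \<omega>. ennreal (real (eig_count (Y \<omega>) B) / real p) \<partial>M)"

definition link_EESD :: "(nat \<Rightarrow> 'a measure) \<Rightarrow> (nat \<Rightarrow> int \<Rightarrow> 'a \<Rightarrow> real) \<Rightarrow> (nat \<Rightarrow> nat)
    \<Rightarrow> (nat \<Rightarrow> nat \<Rightarrow> nat \<Rightarrow> int) \<Rightarrow> nat \<Rightarrow> real measure" where
  "link_EESD M X p L n =
     EESD (M n) (\<lambda>\<omega>. let A = link_matrix (p n) n L (\<lambda>i. X n i \<omega>) in A * transpose_mat A) (p n)"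

definition Cprime :: "(nat \<Rightarrow> real) \<Rightarrow> nat \<Rightarrow> real" where
  "Cprime C m = (if even m then \<bar>C m\<bar> else 0)"

definition alpha :: "(nat \<Rightarrow> real) \<Rightarrow> nat \<Rightarrow> real" where
  "alpha C k = (\<Sum>P\<in>{P. partition_on {1..2*k} P}. \<Prod>V\<in>P. Cprime C (card V))"

text \<open>Carleman-type condition sum_{k>=1} alpha_{2k}^{-1/(2k)} = infinity
  (with the convention 0^{-a} = infinity).\<close>

definition carleman_diverges :: "(nat \<Rightarrow> real) \<Rightarrow> bool" where
  "carleman_diverges a \<longleftrightarrow>
     (\<exists>k\<ge>1. a (2*k) = 0) \<or>
     \<not> summable (\<lambda>k. a (2 * Suc k) powr (- 1 / real (2 * Suc k)))"

end

theory Submission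
  imports Defs
begin


definition cnt :: "real poly \<Rightarrow> real set \<Rightarrow> nat" where
  "cnt q B = (\<Sum>t\<in>{t. poly q t = 0} \<inter> B. order t q)"

lemma cnt_superset:
  assumes "q \<noteq> 0" "finite F" "{t. poly q t = 0} \<subseteq> F"
  shows "cnt q B = (\<Sum>t\<in>F \<inter> B. order t q)"
  unfolding cnt_def
proof (rule sum.mono_neutral_left)
  show "finite (F \<inter> B)" using assms by auto
  show "{t. poly q t = 0} \<inter> B \<subseteq> F \<inter> B" using assms by auto
  show "\<forall>i\<in>F \<inter> B - {t. poly q t = 0} \<inter> B. order i q = 0"
    using order_root by auto
qed

lemma cnt_mult_lin:
  assumes q: "q \<noteq> 0"
  shows "cnt ([:-r,1:] * q) B = cnt q B + (if r \<in> B then 1 else 0)"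
proof -
  define F where "F = insert r {t. poly q t = 0}"
  have fin: "finite F" unfolding F_def using poly_roots_finite[OF q] by auto
  have l0: "[:-r,1:] \<noteq> (0::real poly)" by simp
  have nz: "[:-r,1:] * q \<noteq> 0" using q l0 by (simp only: mult_eq_0_iff) simp
  have "cnt ([:-r,1:] * q) B = (\<Sum>t\<in>F \<inter> B. order t ([:-r,1:] * q))"
    by (rule cnt_superset[OF nz fin]) (auto simp: F_def)
  also have "\<dots> = (\<Sum>t\<in>F \<inter> B. (if t = r then 1 else 0) + order t q)"
  proof (rule sum.cong)
    fix t
    have "order t ([:-r,1:] * q) = order t [:-r,1:] + order t q" by (rule order_mult[OF nz])
    also have "order t [:-r,1:] = (if t = r then 1 else 0)" by (simp add: order_linear')
    finally show "order t ([:-r,1:] * q) = (if t = r then 1 else 0) + order t q" .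
  qed simp
  also have "\<dots> = (\<Sum>t\<in>F \<inter> B. (if t = r then 1 else 0)) + (\<Sum>t\<in>F \<inter> B. order t q)"
    by (simp add: sum.distrib)
  also have "(\<Sum>t\<in>F \<inter> B. order t q) = cnt q B"
    by (rule cnt_superset[OF q fin, symmetric]) (auto simp: F_def)
  also have "(\<Sum>t\<in>F \<inter> B. (if t = r then 1 else 0::nat)) = (if r \<in> B then 1 else 0)"
    using fin by (simp add: sum.delta F_def)
  finally show ?thesis by simp
qed

lemma cnt_pos_root:
  assumes "0 < cnt q B"
  shows "\<exists>t\<in>B. poly q t = 0"
proof (rule ccontr)
  assume "\<not> ?thesis"
  then have "{t. poly q t = 0} \<inter> B = {}" by auto
  with assms show False by (simp add: cnt_def)
qed

lemma poly_sum_le: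
  fixes q :: "'a::comm_semiring_1 poly"
  assumes "degree q \<le> d"
  shows "poly q x = (\<Sum>i\<le>d. coeff q i * x ^ i)"
  unfolding poly_altdef
  by (rule sum.mono_neutral_left) (use assms in \<open>auto intro: le_degree\<close>)

lemma root_bound:
  fixes q :: "real poly"
  assumes deg: "degree q = d" and mon: "coeff q d = 1" and root: "poly q r = 0"
  shows "\<bar>r\<bar> \<le> 1 + (\<Sum>i<d. \<bar>coeff q i\<bar>)"
proof (rule ccontr)
  define S where "S = (\<Sum>i<d. \<bar>coeff q i\<bar>)"
  assume "\<not> \<bar>r\<bar> \<le> 1 + (\<Sum>i<d. \<bar>coeff q i\<bar>)"
  then have big: "\<bar>r\<bar> > 1 + S" by (simp add: S_def)
  have S0: "S \<ge> 0" unfolding S_def by (intro sum_nonneg) auto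
  have r1: "\<bar>r\<bar> > 1" using big S0 by linarith
  have "poly q r = (\<Sum>i\<le>d. coeff q i * r ^ i)" using poly_sum_le[of q d r] deg by simp
  also have "\<dots> = (\<Sum>i<d. coeff q i * r ^ i) + r ^ d"
    using mon by (simp add: lessThan_Suc_atMost[symmetric])
  finally have eq: "r ^ d = - (\<Sum>i<d. coeff q i * r ^ i)" using root by simp
  show False
  proof (cases d)
    case 0
    then show ?thesis using eq by simp
  next
    case (Suc e)
    have "\<bar>\<Sum>i<d. coeff q i * r ^ i\<bar> \<le> (\<Sum>i<d. \<bar>coeff q i\<bar> * \<bar>r\<bar> ^ e)"
    proof -
      have "\<bar>\<Sum>i<d. coeff q i * r ^ i\<bar> \<le> (\<Sum>i<d. \<bar>coeff q i * r ^ i\<bar>)"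
        by (rule sum_abs)
      also have "\<dots> \<le> (\<Sum>i<d. \<bar>coeff q i\<bar> * \<bar>r\<bar> ^ e)"
      proof (rule sum_mono)
        fix i assume "i \<in> {..<d}"
        then have "i \<le> e" using Suc by auto
        then have "\<bar>r\<bar> ^ i \<le> \<bar>r\<bar> ^ e" using r1 by (intro power_increasing) auto
        then show "\<bar>coeff q i * r ^ i\<bar> \<le> \<bar>coeff q i\<bar> * \<bar>r\<bar> ^ e"
          by (simp add: abs_mult power_abs mult_left_mono)
      qed
      finally show ?thesis .
    qed
    also have "\<dots> = S * \<bar>r\<bar> ^ e" by (simp add: S_def sum_distrib_right)
    also have "\<dots> < \<bar>r\<bar> * \<bar>r\<bar> ^ e"
      using big r1 by (intro mult_strict_right_mono) auto
    also have "\<dots> = \<bar>r ^ d\<bar>" using Suc by (simp add: power_abs abs_mult)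
    finally show False using eq by simp
  qed
qed

lemma coeff_synthetic_div_rec:
  "coeff (synthetic_div p c) i = coeff p (Suc i) + c * coeff (synthetic_div p c) (Suc i)"
proof -
  have "coeff (p + Polynomial.smult c (synthetic_div p c)) (Suc i) = coeff (pCons (poly p c) (synthetic_div p c)) (Suc i)"
    by (simp only: synthetic_div_correct)
  then show ?thesis by simp
qed

lemma cnt_usc:
  fixes qs :: "nat \<Rightarrow> real poly"
  assumes "\<And>n. degree (qs n) = d" "\<And>n. coeff (qs n) d = 1"
    and "\<And>i. (\<lambda>n. coeff (qs n) i) \<longlonglongrightarrow> coeff q i"
    and "\<And>n. k \<le> cnt (qs n) {..x}"
  shows "k \<le> cnt q {..x}"
  using assms
proof (induction k arbitrary: d qs q)
  case 0
  then show ?case by simp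
next
  case (Suc k)
  note deg = Suc.prems(1) and mon = Suc.prems(2) and lim = Suc.prems(3) and c = Suc.prems(4)
  have qsnz: "qs n \<noteq> 0" for n using mon[of n] by auto
  have "\<exists>r. r \<le> x \<and> poly (qs n) r = 0" for n
    using cnt_pos_root[of "qs n" "{..x}"] c[of n] by auto
  then obtain r where r: "\<And>n. r n \<le> x" "\<And>n. True" "\<And>n. poly (qs n) (r n) = 0"
    by metis
  define Q where "Q n = synthetic_div (qs n) (r n)" for n
  have fac: "qs n = [:-r n,1:] * Q n" for n
    using synthetic_div_correct'[of "r n" "qs n"] r(3)[of n] by (simp add: Q_def)
  have Qnz: "Q n \<noteq> 0" for n using fac[of n] qsnz[of n] by (metis mult_zero_right)
  have d1: "d \<ge> 1"
  proof (rule ccontr)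
    assume "\<not> d \<ge> 1"
    then have "d = 0" by simp
    then have "poly (qs 0) (r 0) = 1" using deg[of 0] mon[of 0]
      by (simp add: poly_sum_le[of _ 0])
    then show False using r(3)[of 0] by simp
  qed
  have degQ: "degree (Q n) = d - 1" for n using deg[of n] by (simp add: Q_def degree_synthetic_div)
  have monQ: "coeff (Q n) (d - 1) = 1" for n
  proof -
    have lc: "lead_coeff ([:-r n,1:] * Q n) = lead_coeff ([:-r n,1:]) * lead_coeff (Q n)"
      by (rule lead_coeff_mult)
    have "lead_coeff (qs n) = lead_coeff ([:-r n,1:]) * lead_coeff (Q n)"
      using lc fac[of n] by metis
    then show ?thesis using deg[of n] mon[of n] degQ[of n] by simp
  qed
  have cQ: "k \<le> cnt (Q n) {..x}" for n
    using c[of n] cnt_mult_lin[OF Qnz[of n], of "r n" "{..x}"] r(1)[of n] fac[of n] by simp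
  define b where "b n = 1 + (\<Sum>i<d. \<bar>coeff (qs n) i\<bar>)" for n
  have rb: "\<bar>r n\<bar> \<le> b n" for n
    unfolding b_def by (rule root_bound[OF deg mon r(3)])
  have "convergent b" unfolding b_def convergent_def
  proof
    show "(\<lambda>n. 1 + (\<Sum>i<d. \<bar>coeff (qs n) i\<bar>)) \<longlonglongrightarrow> 1 + (\<Sum>i<d. \<bar>coeff q i\<bar>)"
      by (intro tendsto_intros lim)
  qed
  then have "Bseq b" by (rule convergent_imp_Bseq)
  then obtain K where K: "\<And>n. norm (b n) \<le> K" by (auto simp: Bseq_def)
  have "bounded (range r)"
    unfolding bounded_iff using rb K by (metis abs_ge_self order_trans rangeE real_norm_def)
  then obtain l \<phi> where phi: "strict_mono \<phi>" and rl: "(r \<circ> \<phi>) \<longlonglongrightarrow> l"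
    using bounded_imp_convergent_subsequence by blast
  have lx: "l \<le> x"
    using rl r(1) by (intro LIMSEQ_le_const2) auto
  have limphi: "(\<lambda>n. coeff (qs (\<phi> n)) i) \<longlonglongrightarrow> coeff q i" for i
    using LIMSEQ_subseq_LIMSEQ[OF lim[of i] phi] by (simp add: o_def)
  have qcoeff0: "coeff q i = 0" if "i > d" for i
  proof -
    have "(\<lambda>n. coeff (qs n) i) = (\<lambda>n. 0)" using that deg by (intro ext coeff_eq_0) auto
    then have "(\<lambda>n. 0::real) \<longlonglongrightarrow> coeff q i" using lim[of i] by simp
    then show ?thesis by (simp add: LIMSEQ_const_iff)
  qed
  have qmon: "coeff q d = 1"
  proof -
    have "(\<lambda>n. 1::real) \<longlonglongrightarrow> coeff q d" using lim[of d] mon by simp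
    then show ?thesis by (simp add: LIMSEQ_const_iff)
  qed
  have qdeg: "degree q = d"
  proof (rule antisym)
    show "degree q \<le> d" using qcoeff0 by (intro degree_le) auto
    show "d \<le> degree q" using qmon by (intro le_degree) auto
  qed
  have qnz: "q \<noteq> 0" using qmon by auto
  have "(\<lambda>n. poly (qs (\<phi> n)) (r (\<phi> n))) \<longlonglongrightarrow> poly q l"
  proof -
    have "(\<lambda>n. \<Sum>i\<le>d. coeff (qs (\<phi> n)) i * (r (\<phi> n)) ^ i) \<longlonglongrightarrow> (\<Sum>i\<le>d. coeff q i * l ^ i)"
      using rl limphi by (intro tendsto_intros) (auto simp: o_def)
    moreover have "(\<lambda>n. poly (qs (\<phi> n)) (r (\<phi> n))) = (\<lambda>n. \<Sum>i\<le>d. coeff (qs (\<phi> n)) i * (r (\<phi> n)) ^ i)"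
      by (intro ext poly_sum_le) (simp add: deg)
    moreover have "poly q l = (\<Sum>i\<le>d. coeff q i * l ^ i)"
      by (rule poly_sum_le) (simp add: qdeg)
    ultimately show ?thesis by simp
  qed
  then have ql: "poly q l = 0" using r(3) by (simp add: LIMSEQ_const_iff)
  define Ql where "Ql = synthetic_div q l"
  have facl: "q = [:-l,1:] * Ql"
    using synthetic_div_correct'[of l q] ql by (simp add: Ql_def)
  have Qlnz: "Ql \<noteq> 0" using facl qnz by (metis mult_zero_right)
  have degQl: "degree Ql = d - 1" using qdeg by (simp add: Ql_def degree_synthetic_div)
  have Qconv: "(\<lambda>n. coeff (Q (\<phi> n)) i) \<longlonglongrightarrow> coeff Ql i" for i
  proof -
    have "\<forall>i. d - i \<le> j \<longrightarrow> (\<lambda>n. coeff (Q (\<phi> n)) i) \<longlonglongrightarrow> coeff Ql i" for j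
    proof (induction j)
      case 0
      show ?case
      proof (intro allI impI)
        fix i assume "d - i \<le> 0"
        then have "i > d - 1" using d1 by auto
        then have "coeff (Q (\<phi> n)) i = 0" "coeff Ql i = 0" for n
          using degQ[of "\<phi> n"] degQl by (auto intro!: coeff_eq_0)
        then show "(\<lambda>n. coeff (Q (\<phi> n)) i) \<longlonglongrightarrow> coeff Ql i" by simp
      qed
    next
      case (Suc j)
      show ?case
      proof (intro allI impI)
        fix i assume i: "d - i \<le> Suc j"
        show "(\<lambda>n. coeff (Q (\<phi> n)) i) \<longlonglongrightarrow> coeff Ql i"
        proof (cases "d - i \<le> j")
          case True then show ?thesis using Suc.IH by auto
        next
          case False
          then have "d - Suc i \<le> j" using i by auto
          then have IH: "(\<lambda>n. coeff (Q (\<phi> n)) (Suc i)) \<longlonglongrightarrow> coeff Ql (Suc i)" using Suc.IH by auto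
          have "(\<lambda>n. coeff (qs (\<phi> n)) (Suc i) + r (\<phi> n) * coeff (Q (\<phi> n)) (Suc i))
                  \<longlonglongrightarrow> coeff q (Suc i) + l * coeff Ql (Suc i)"
            using limphi rl IH by (intro tendsto_intros) (auto simp: o_def)
          then show ?thesis
            by (simp add: Q_def Ql_def coeff_synthetic_div_rec[of _ _ i])
        qed
      qed
    qed
    then show ?thesis by auto
  qed
  have "k \<le> cnt Ql {..x}"
    by (rule Suc.IH[of "\<lambda>n. Q (\<phi> n)" "d - 1"]) (use degQ monQ Qconv cQ in auto)
  then show ?case using cnt_mult_lin[OF Qlnz, of l "{..x}"] facl lx by simp
qed



definition pconv :: "(nat \<Rightarrow> real poly) \<Rightarrow> real poly \<Rightarrow> bool" where
  "pconv f g \<longleftrightarrow> (\<forall>k. (\<lambda>m. coeff (f m) k) \<longlonglongrightarrow> coeff g k)"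

lemma pconv_const: "pconv (\<lambda>m. c) c"
  by (simp add: pconv_def)

lemma pconv_add: "pconv f g \<Longrightarrow> pconv f' g' \<Longrightarrow> pconv (\<lambda>m. f m + f' m) (g + g')"
  by (auto simp: pconv_def intro!: tendsto_intros)

lemma pconv_mult: "pconv f g \<Longrightarrow> pconv f' g' \<Longrightarrow> pconv (\<lambda>m. f m * f' m) (g * g')"
  by (auto simp: pconv_def coeff_mult intro!: tendsto_intros)

lemma pconv_sum:
  assumes "finite I" "\<And>i. i \<in> I \<Longrightarrow> pconv (\<lambda>m. f m i) (g i)"
  shows "pconv (\<lambda>m. \<Sum>i\<in>I. f m i) (\<Sum>i\<in>I. g i)"
  using assms by (induction I rule: finite_induct) (auto simp: pconv_const intro!: pconv_add)

lemma pconv_prod: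
  assumes "finite I" "\<And>i. i \<in> I \<Longrightarrow> pconv (\<lambda>m. f m i) (g i)"
  shows "pconv (\<lambda>m. \<Prod>i\<in>I. f m i) (\<Prod>i\<in>I. g i)"
  using assms by (induction I rule: finite_induct) (auto simp: pconv_const intro!: pconv_mult)

lemma pconv_char_poly:
  fixes As :: "nat \<Rightarrow> real mat"
  assumes As: "\<And>m. As m \<in> carrier_mat n n" and A: "A \<in> carrier_mat n n"
    and lim: "\<And>i j. i < n \<Longrightarrow> j < n \<Longrightarrow> (\<lambda>m. As m $$ (i,j)) \<longlonglongrightarrow> A $$ (i,j)"
  shows "pconv (\<lambda>m. char_poly (As m)) (char_poly A)"
proof -
  have cm: "char_poly_matrix B \<in> carrier_mat n n" if "B \<in> carrier_mat n n" for B :: "real mat"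
    using that by (simp add: char_poly_matrix_def)
  have ent: "char_poly_matrix B $$ (i,j) = [:0,1:] * (if i = j then 1 else 0) + [:- B $$ (i,j):]"
    if "B \<in> carrier_mat n n" "i < n" "j < n" for B :: "real mat" and i j
    using that by (simp add: char_poly_matrix_def)
  have eq: "char_poly B = (\<Sum>p | p permutes {0..<n}. of_int (sign p) *
      (\<Prod>i = 0..<n. [:0,1:] * (if i = p i then 1 else 0) + [:- B $$ (i,p i):]))"
    if "B \<in> carrier_mat n n" for B :: "real mat"
    unfolding char_poly_def det_def'[OF cm[OF that]]
    by (intro sum.cong refl arg_cong2[where f="(*)"] prod.cong)
       (auto simp: ent[OF that] permutes_in_image)
  show ?thesis
    unfolding eq[OF As] eq[OF A]
  proof (rule pconv_sum)
    show "finite {p. p permutes {0..<n}}" by (simp add: finite_permutations)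
    fix p assume p: "p \<in> {p. p permutes {0..<n}}"
    show "pconv (\<lambda>m. of_int (sign p) * (\<Prod>i = 0..<n. [:0,1:] * (if i = p i then 1 else 0) + [:- As m $$ (i,p i):]))
      (of_int (sign p) * (\<Prod>i = 0..<n. [:0,1:] * (if i = p i then 1 else 0) + [:- A $$ (i,p i):]))"
    proof (intro pconv_mult pconv_const pconv_prod pconv_add)
      fix i assume i: "i \<in> {0..<n}"
      then have "p i < n" using p permutes_in_image by fastforce
      then have "(\<lambda>m. As m $$ (i,p i)) \<longlonglongrightarrow> A $$ (i,p i)" using i lim by auto
      then show "pconv (\<lambda>m. [:- As m $$ (i, p i):]) [:- A $$ (i, p i):]"
        unfolding pconv_def by (auto simp: coeff_pCons split: nat.splits intro!: tendsto_intros)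
    qed simp
  qed
qed



lemma cnt_cong_roots:
  assumes "{t. poly q t = 0} \<inter> A = {t. poly q t = 0} \<inter> B"
  shows "cnt q A = cnt q B"
  using assms unfolding cnt_def by simp

lemma cnt_Un:
  assumes "q \<noteq> 0" "A \<inter> B = {}"
  shows "cnt q (A \<union> B) = cnt q A + cnt q B"
proof -
  have fin: "finite {t. poly q t = 0}" using poly_roots_finite[OF assms(1)] .
  have "{t. poly q t = 0} \<inter> (A \<union> B) = ({t. poly q t = 0} \<inter> A) \<union> ({t. poly q t = 0} \<inter> B)" by auto
  then show ?thesis unfolding cnt_def
    using fin assms(2) by (simp add: sum.union_disjoint disjoint_iff)
qed

lemma cnt_empty: "cnt q {} = 0" by (simp add: cnt_def)

lemma cnt_measurable_all:
  fixes Q :: "'b \<Rightarrow> real poly"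
  assumes nz: "\<And>v. Q v \<noteq> 0"
    and half: "\<And>x. (\<lambda>v. real (cnt (Q v) {..x})) \<in> borel_measurable M"
    and A: "A \<in> sets borel"
  shows "(\<lambda>v. real (cnt (Q v) A)) \<in> borel_measurable M"
proof -
  have fin: "finite {t. poly (Q v) t = 0}" for v using poly_roots_finite[OF nz] .
  have univ: "(\<lambda>v. real (cnt (Q v) UNIV)) \<in> borel_measurable M"
  proof (rule borel_measurable_LIMSEQ_real[where u="\<lambda>k v. real (cnt (Q v) {..real k})"])
    fix v
    obtain N :: nat where N: "\<forall>t\<in>{t. poly (Q v) t = 0}. t \<le> real N"
    proof -
      obtain N :: nat where "Max (insert 0 {t. poly (Q v) t = 0}) \<le> real N"
        using real_arch_simple by blast
      then show ?thesis using that fin[of v] by (meson Max_ge finite.insertI insertCI order_trans)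
    qed
    have "eventually (\<lambda>k. real (cnt (Q v) {..real k}) = real (cnt (Q v) UNIV)) sequentially"
    proof (rule eventually_sequentiallyI[of N])
      fix k assume "N \<le> k"
      then have "real N \<le> real k" by simp
      then have "{t. poly (Q v) t = 0} \<inter> {..real k} = {t. poly (Q v) t = 0} \<inter> UNIV"
        using N by auto
      then show "real (cnt (Q v) {..real k}) = real (cnt (Q v) UNIV)"
        using cnt_cong_roots by metis
    qed
    then show "(\<lambda>k. real (cnt (Q v) {..real k})) \<longlonglongrightarrow> real (cnt (Q v) UNIV)"
      by (rule tendsto_eventually)
  qed (rule half)
  have Asig: "A \<in> sigma_sets UNIV (range atMost)"
    using A by (simp add: borel_eq_atMost sets_measure_of)
  have ist: "Int_stable (range (atMost :: real \<Rightarrow> real set))"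
      by (auto simp: Int_stable_def)
  have pw: "range atMost \<subseteq> Pow (UNIV :: real set)" by simp
  from ist pw Asig show ?thesis
  proof (induction rule: sigma_sets_induct_disjoint)
    case (basic A)
    then show ?case using half by auto
  next
    case empty
    then show ?case by (simp add: cnt_empty)
  next
    case (compl A)
    have "real (cnt (Q v) (UNIV - A)) = real (cnt (Q v) UNIV) - real (cnt (Q v) A)" for v
    proof -
      have "cnt (Q v) UNIV = cnt (Q v) ((UNIV - A) \<union> A)" by simp
      also have "\<dots> = cnt (Q v) (UNIV - A) + cnt (Q v) A" by (rule cnt_Un[OF nz]) auto
      finally show ?thesis by simp
    qed
    then show ?case using univ compl.IH by simp
  next
    case (union A)
    show ?case
    proof (rule borel_measurable_LIMSEQ_real[where u="\<lambda>N v. \<Sum>i<N. real (cnt (Q v) (A i))"])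
      fix v
      have partial: "(\<Sum>i<N. cnt (Q v) (A i)) = cnt (Q v) (\<Union>i<N. A i)" for N
      proof (induction N)
        case 0 then show ?case by (simp add: cnt_empty)
      next
        case (Suc N)
        have "(\<Union>i<Suc N. A i) = (\<Union>i<N. A i) \<union> A N" by (auto simp: lessThan_Suc)
        moreover have "(\<Union>i<N. A i) \<inter> A N = {}"
        proof (rule ccontr)
          assume "(\<Union>i<N. A i) \<inter> A N \<noteq> {}"
          then obtain t i where "i < N" "t \<in> A i" "t \<in> A N" by auto
          moreover have "A i \<inter> A N = {}" using union.hyps(1) \<open>i < N\<close>
            unfolding disjoint_family_on_def by auto
          ultimately show False by auto
        qed
        ultimately show ?case using Suc by (simp add: cnt_Un[OF nz])
      qed
      define Z where "Z = {t. poly (Q v) t = 0} \<inter> (\<Union>i. A i)"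
      have finZ: "finite Z" using fin[of v] by (simp add: Z_def)
      have "\<forall>t\<in>Z. \<exists>i. t \<in> A i" by (auto simp: Z_def)
      then obtain ix where ix: "\<And>t. t \<in> Z \<Longrightarrow> t \<in> A (ix t)" by metis
      define N where "N = Suc (Max (insert 0 (ix ` Z)))"
      have "eventually (\<lambda>M. (\<Sum>i<M. real (cnt (Q v) (A i))) = real (cnt (Q v) (\<Union>i. A i))) sequentially"
      proof (rule eventually_sequentiallyI[of N])
        fix K assume K: "N \<le> K"
        have "{t. poly (Q v) t = 0} \<inter> (\<Union>i<K. A i) = {t. poly (Q v) t = 0} \<inter> (\<Union>i. A i)"
        proof
          show "{t. poly (Q v) t = 0} \<inter> (\<Union>i<K. A i) \<subseteq> {t. poly (Q v) t = 0} \<inter> (\<Union>i. A i)" by auto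
          show "{t. poly (Q v) t = 0} \<inter> (\<Union>i. A i) \<subseteq> {t. poly (Q v) t = 0} \<inter> (\<Union>i<K. A i)"
          proof
            fix t assume t: "t \<in> {t. poly (Q v) t = 0} \<inter> (\<Union>i. A i)"
            then have tZ: "t \<in> Z" by (simp add: Z_def)
            have "ix t \<le> Max (insert 0 (ix ` Z))" using finZ tZ by (intro Max_ge) auto
            then have "ix t < K" using K by (simp add: N_def)
            then show "t \<in> {t. poly (Q v) t = 0} \<inter> (\<Union>i<K. A i)" using t ix[OF tZ] by auto
          qed
        qed
        then have "cnt (Q v) (\<Union>i<K. A i) = cnt (Q v) (\<Union>i. A i)" by (rule cnt_cong_roots)
        then show "(\<Sum>i<K. real (cnt (Q v) (A i))) = real (cnt (Q v) (\<Union>i. A i))"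
          using partial[of K] by (metis of_nat_sum)
      qed
      then show "(\<lambda>N. \<Sum>i<N. real (cnt (Q v) (A i))) \<longlonglongrightarrow> real (cnt (Q v) (\<Union> (range A)))"
        by (rule tendsto_eventually)
    next
      fix N show "(\<lambda>v. \<Sum>i<N. real (cnt (Q v) (A i))) \<in> borel_measurable M"
        using union.IH by auto
    qed
  qed
qed



lemma link_matrix_carrier: "link_matrix p n L x \<in> carrier_mat p n"
  by (simp add: link_matrix_def)

lemma link_matrix_index: "i < p \<Longrightarrow> j < n \<Longrightarrow> link_matrix p n L x $$ (i,j) = x (L n (i+1) (j+1))"
  by (simp add: link_matrix_def)

lemma AAt_index:
  assumes "A \<in> carrier_mat p n" "i < p" "j < p"
  shows "(A * transpose_mat A) $$ (i,j) = (\<Sum>l<n. A $$ (i,l) * A $$ (j,l))"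
  using assms by (simp add: scalar_prod_def atLeast0LessThan mult.commute)

lemma AAt_carrier: "A \<in> carrier_mat p n \<Longrightarrow> A * transpose_mat A \<in> carrier_mat p p"
  by simp

lemma TH_eq:
  fixes x :: "int \<Rightarrow> real"
  shows "(let A = link_matrix p n link_T x in A * transpose_mat A) =
         (let A = link_matrix p n link_H (\<lambda>k. x (k - int (n+1))) in A * transpose_mat A)"
proof -
  let ?A = "link_matrix p n link_T x" and ?B = "link_matrix p n link_H (\<lambda>k. x (k - int (n+1)))"
  have cA: "?A \<in> carrier_mat p n" and cB: "?B \<in> carrier_mat p n" by (simp_all add: link_matrix_carrier)
  have "?A * transpose_mat ?A = ?B * transpose_mat ?B"
  proof (rule eq_matI)
    show "dim_row (?A * transpose_mat ?A) = dim_row (?B * transpose_mat ?B)" using cA cB by simp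
    show "dim_col (?A * transpose_mat ?A) = dim_col (?B * transpose_mat ?B)" using cA cB by simp
    fix i j assume "i < dim_row (?B * transpose_mat ?B)" "j < dim_col (?B * transpose_mat ?B)"
    then have i: "i < p" and j: "j < p" using cB by auto
    have "(?A * transpose_mat ?A) $$ (i,j) = (\<Sum>l<n. x (int i - int l) * x (int j - int l))"
      using AAt_index[OF cA i j] i j by (simp add: link_matrix_index link_T_def)
    also have "\<dots> = (\<Sum>l<n. x (int i + int l + 1 - int n) * x (int j + int l + 1 - int n))"
      by (rule sum.reindex_bij_witness[of _ "\<lambda>l. n - 1 - l" "\<lambda>l. n - 1 - l"]) (auto simp: of_nat_diff)
    also have "\<dots> = (?B * transpose_mat ?B) $$ (i,j)"
      using AAt_index[OF cB i j] i j by (simp add: link_matrix_index link_H_def algebra_simps)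
    finally show "(?A * transpose_mat ?A) $$ (i,j) = (?B * transpose_mat ?B) $$ (i,j)" .
  qed
  then show ?thesis by (simp only: Let_def)
qed

definition Prev :: "nat \<Rightarrow> real mat" where
  "Prev p = mat p p (\<lambda>(i,j). if j = p - 1 - i then 1 else 0)"

lemma Prev_carrier: "Prev p \<in> carrier_mat p p" by (simp add: Prev_def)

lemma Prev_left:
  assumes "B \<in> carrier_mat p m" "i < p" "j < m"
  shows "(Prev p * B) $$ (i,j) = B $$ (p - 1 - i, j)"
proof -
  have "(Prev p * B) $$ (i,j) = (\<Sum>k<p. (if k = p - 1 - i then 1 else 0) * B $$ (k,j))"
    using assms by (simp add: Prev_def scalar_prod_def atLeast0LessThan)
  also have "\<dots> = (\<Sum>k<p. (if k = p - 1 - i then B $$ (k,j) else 0))"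
    by (intro sum.cong) auto
  also have "\<dots> = B $$ (p - 1 - i, j)"
    using assms by (simp add: sum.delta)
  finally show ?thesis .
qed

lemma Prev_right:
  assumes "B \<in> carrier_mat m p" "i < m" "j < p"
  shows "(B * Prev p) $$ (i,j) = B $$ (i, p - 1 - j)"
proof -
  have "(B * Prev p) $$ (i,j) = (\<Sum>k<p. B $$ (i,k) * (if j = p - 1 - k then 1 else 0))"
    using assms by (simp add: Prev_def scalar_prod_def atLeast0LessThan)
  also have "\<dots> = (\<Sum>k<p. (if k = p - 1 - j then B $$ (i,k) else 0))"
    using assms by (intro sum.cong) auto
  also have "\<dots> = B $$ (i, p - 1 - j)"
    using assms by (simp add: sum.delta)
  finally show ?thesis .
qed

lemma Prev_sq: "Prev p * Prev p = 1\<^sub>m p"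
proof (rule eq_matI)
  fix i j assume "i < dim_row (1\<^sub>m p)" "j < dim_col (1\<^sub>m p)"
  then have i: "i < p" and j: "j < p" by auto
  show "(Prev p * Prev p) $$ (i,j) = 1\<^sub>m p $$ (i,j)"
    using Prev_left[OF Prev_carrier i j] i j by (auto simp: Prev_def)
qed (simp_all add: Prev_def)

lemma Prev_conj:
  assumes "B \<in> carrier_mat p p" "i < p" "j < p"
  shows "(Prev p * B * Prev p) $$ (i,j) = B $$ (p - 1 - i, p - 1 - j)"
proof -
  have c: "Prev p * B \<in> carrier_mat p p" by (rule mult_carrier_mat[OF Prev_carrier assms(1)])
  show ?thesis using Prev_right[OF c assms(2,3)] Prev_left[OF assms(1) assms(2)] assms by simp
qed

lemma RC_eq:
  fixes x :: "int \<Rightarrow> real"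
  shows "char_poly (let A = link_matrix p n link_R x in A * transpose_mat A) =
         char_poly (let A = link_matrix p n link_C x in A * transpose_mat A)"
proof -
  let ?A = "link_matrix p n link_R x" and ?B = "link_matrix p n link_C x"
  let ?SA = "?A * transpose_mat ?A" and ?SB = "?B * transpose_mat ?B"
  have cA: "?A \<in> carrier_mat p n" and cB: "?B \<in> carrier_mat p n" by (simp_all add: link_matrix_carrier)
  have cSB: "?SB \<in> carrier_mat p p" using cB by simp
  have eq: "?SA = Prev p * ?SB * Prev p"
  proof (rule eq_matI)
    show "dim_row ?SA = dim_row (Prev p * ?SB * Prev p)" using cA by (simp add: Prev_def)
    show "dim_col ?SA = dim_col (Prev p * ?SB * Prev p)" using cA by (simp add: Prev_def)
    fix i j assume "i < dim_row (Prev p * ?SB * Prev p)" "j < dim_col (Prev p * ?SB * Prev p)"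
    then have i: "i < p" and j: "j < p" by (auto simp: Prev_def)
    have i': "p - 1 - i < p" and j': "p - 1 - j < p" using i j by auto
    have "?SA $$ (i,j) = (\<Sum>l<n. x ((int i + int l) mod int n) * x ((int j + int l) mod int n))"
      using AAt_index[OF cA i j] i j by (simp add: link_matrix_index link_R_def add_ac)
    also have "\<dots> = (\<Sum>l<n. x ((int l - int (p - 1 - i)) mod int n) * x ((int l - int (p - 1 - j)) mod int n))"
    proof (cases "n = 0")
      case True then show ?thesis by simp
    next
      case False
      then have n0: "int n > 0" by simp
      show ?thesis
      proof (rule sum.reindex_bij_witness[of _ "\<lambda>l. nat ((int l - int p + 1) mod int n)"
                                             "\<lambda>l. nat ((int l + int p - 1) mod int n)"])
        fix l assume l: "l \<in> {..<n}"
        have "((int l + int p - 1) mod int n - int p + 1) mod int n = ((int l + int p - 1) mod int n + (1 - int p)) mod int n"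
          by (simp add: algebra_simps)
        also have "\<dots> = (int l + int p - 1 + (1 - int p)) mod int n" by (simp add: mod_add_left_eq)
        also have "\<dots> = int l" using l by simp
        finally show "nat ((int (nat ((int l + int p - 1) mod int n)) - int p + 1) mod int n) = l"
          using n0 by simp
        show "nat ((int l + int p - 1) mod int n) \<in> {..<n}"
          using n0 by (simp add: nat_less_iff)
        have "((int l - int p + 1) mod int n + int p - 1) mod int n = ((int l - int p + 1) mod int n + (int p - 1)) mod int n"
          by (simp add: algebra_simps)
        also have "\<dots> = (int l - int p + 1 + (int p - 1)) mod int n" by (simp add: mod_add_left_eq)
        also have "\<dots> = int l" using l by simp
        finally show "nat ((int (nat ((int l - int p + 1) mod int n)) + int p - 1) mod int n) = l"
          using n0 by simp
        show "nat ((int l - int p + 1) mod int n) \<in> {..<n}"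
          using n0 by (simp add: nat_less_iff)
        have e1: "(int (nat ((int l + int p - 1) mod int n)) - int (p - 1 - i)) mod int n = (int i + int l) mod int n"
        proof -
          have "(int (nat ((int l + int p - 1) mod int n)) - int (p - 1 - i)) = (int l + int p - 1) mod int n + (int i + 1 - int p)"
            using n0 i by (simp add: of_nat_diff)
          then have "(int (nat ((int l + int p - 1) mod int n)) - int (p - 1 - i)) mod int n = ((int l + int p - 1) mod int n + (int i + 1 - int p)) mod int n"
            by (simp only:)
          also have "\<dots> = (int l + int p - 1 + (int i + 1 - int p)) mod int n" by (rule mod_add_left_eq)
          also have "int l + int p - 1 + (int i + 1 - int p) = int i + int l" by simp
          finally show ?thesis .
        qed
        have e2: "(int (nat ((int l + int p - 1) mod int n)) - int (p - 1 - j)) mod int n = (int j + int l) mod int n"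
        proof -
          have "(int (nat ((int l + int p - 1) mod int n)) - int (p - 1 - j)) = (int l + int p - 1) mod int n + (int j + 1 - int p)"
            using n0 j by (simp add: of_nat_diff)
          then have "(int (nat ((int l + int p - 1) mod int n)) - int (p - 1 - j)) mod int n = ((int l + int p - 1) mod int n + (int j + 1 - int p)) mod int n"
            by (simp only:)
          also have "\<dots> = (int l + int p - 1 + (int j + 1 - int p)) mod int n" by (rule mod_add_left_eq)
          also have "int l + int p - 1 + (int j + 1 - int p) = int j + int l" by simp
          finally show ?thesis .
        qed
        show "x ((int (nat ((int l + int p - 1) mod int n)) - int (p - 1 - i)) mod int n) *
              x ((int (nat ((int l + int p - 1) mod int n)) - int (p - 1 - j)) mod int n) =
              x ((int i + int l) mod int n) * x ((int j + int l) mod int n)"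
          by (simp only: e1 e2)
      qed
    qed
    also have "\<dots> = ?SB $$ (p - 1 - i, p - 1 - j)"
      using AAt_index[OF cB i' j'] i' j' by (simp add: link_matrix_index link_C_def)
    also have "\<dots> = (Prev p * ?SB * Prev p) $$ (i,j)"
      by (rule Prev_conj[OF cSB i j, symmetric])
    finally show "?SA $$ (i,j) = (Prev p * ?SB * Prev p) $$ (i,j)" .
  qed
  have "similar_mat ?SA ?SB"
    unfolding similar_mat_def similar_mat_wit_def
  proof (intro exI[of _ "Prev p"])
    have dr: "dim_row (Prev p) = p" by (simp add: Prev_def)
    have cc: "Prev p * ?SB * Prev p \<in> carrier_mat p p" by (rule mult_carrier_mat[OF mult_carrier_mat[OF Prev_carrier cSB] Prev_carrier])
    show "let n = dim_row ?SA in {?SA, ?SB, Prev p, Prev p} \<subseteq> carrier_mat n n \<and> Prev p * Prev p = 1\<^sub>m n \<and> Prev p * Prev p = 1\<^sub>m n \<and> ?SA = Prev p * ?SB * Prev p"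
      using eq Prev_sq cSB Prev_carrier cc cA by (simp add: Let_def dr)
  qed
  then show ?thesis unfolding Let_def by (rule char_poly_similar)
qed



lemma weak_conv_unique:
  assumes M1: "real_distribution M1" and M2: "real_distribution M2"
    and c1: "weak_conv_m F M1" and c2: "weak_conv_m F M2"
  shows "M1 = M2"
proof -
  interpret M1: real_distribution M1 by (rule M1)
  interpret M2: real_distribution M2 by (rule M2)
  have "countable ({x. measure M1 {x} \<noteq> 0} \<union> {x. measure M2 {x} \<noteq> 0})"
    by (intro countable_Un M2.countable_support M1.countable_support)
  then have count: "countable {x. measure M1 {x} \<noteq> 0 \<or> measure M2 {x} \<noteq> 0}"
    by (simp add: Un_def)
  have eqc: "cdf M1 b = cdf M2 b" if "measure M1 {b} = 0" "measure M2 {b} = 0" for b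
  proof -
    have "isCont (cdf M1) b" "isCont (cdf M2) b" using that by (simp_all add: M1.isCont_cdf M2.isCont_cdf)
    then have "(\<lambda>n. cdf (F n) b) \<longlonglongrightarrow> cdf M1 b" "(\<lambda>n. cdf (F n) b) \<longlonglongrightarrow> cdf M2 b"
      using c1 c2 by (auto simp: weak_conv_m_def weak_conv_def)
    then show ?thesis by (rule LIMSEQ_unique)
  qed
  have "cdf M1 = cdf M2"
  proof (rule ext)
    fix x
    let ?D = "\<lambda>x. \<bar>cdf M1 x - cdf M2 x\<bar>"
    { fix \<epsilon> :: real
      assume "\<epsilon> > 0"
      have "(?D \<longlongrightarrow> ?D x) (at_right x)"
        using M1.cdf_is_right_cont [of x] M2.cdf_is_right_cont [of x]
        by (intro tendsto_intros) (auto simp add: continuous_within)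
      then have "eventually (\<lambda>y. \<bar>?D y - ?D x\<bar> < \<epsilon>) (at_right x)"
        using \<open>\<epsilon> > 0\<close> by (simp only: tendsto_iff dist_real_def eventually_conj eventually_at_right_less)
      then obtain N where "N > x" "\<And>y. x < y \<Longrightarrow> y < N \<Longrightarrow> \<bar>?D y - ?D x\<bar> < \<epsilon>"
        by (auto simp add: eventually_at_right[OF less_add_one])
      with open_minus_countable[OF count, of "{x <..< N}"] obtain b where "x < b" "b < N"
          "measure M1 {b} = 0" "measure M2 {b} = 0" and 2: "\<bar>?D b - ?D x\<bar> < \<epsilon>"
        by (auto simp: abs_minus_commute)
      have "?D b = 0" using eqc[OF \<open>measure M1 {b} = 0\<close> \<open>measure M2 {b} = 0\<close>] by simp
      then have "?D x \<le> \<epsilon>" using 2 by simp }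
    then show "cdf M1 x = cdf M2 x"
      by (metis abs_le_zero_iff dense_ge eq_iff_diff_eq_0)
  qed
  then show ?thesis by (rule cdf_unique[OF M1 M2])
qed



lemma cnt_closed:
  fixes Sf :: "(int \<Rightarrow> real) \<Rightarrow> real mat"
  assumes car: "\<And>v. Sf v \<in> carrier_mat p p"
    and cont: "\<And>vs v i j. (\<And>k. (\<lambda>m. vs m k) \<longlonglongrightarrow> v k) \<Longrightarrow> i < p \<Longrightarrow> j < p \<Longrightarrow>
                 (\<lambda>m. Sf (vs m) $$ (i,j)) \<longlonglongrightarrow> Sf v $$ (i,j)"
  shows "closed {v. k \<le> cnt (char_poly (Sf v)) {..x}}"
  unfolding closed_sequential_limits
proof (intro allI impI)
  fix vs l assume h: "(\<forall>n. vs n \<in> {v. k \<le> cnt (char_poly (Sf v)) {..x}}) \<and> vs \<longlonglongrightarrow> l"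
  have comp: "(\<lambda>m. vs m i) \<longlonglongrightarrow> l i" for i
  proof -
    have "isCont (\<lambda>f. f i) l"
      using continuous_on_product_coordinates[of i] continuous_on_eq_continuous_at[OF open_UNIV] by blast
    from isCont_tendsto_compose[OF this, of vs sequentially] h show ?thesis by simp
  qed
  have pc: "pconv (\<lambda>m. char_poly (Sf (vs m))) (char_poly (Sf l))"
    by (rule pconv_char_poly[OF car car]) (rule cont[OF comp])
  show "l \<in> {v. k \<le> cnt (char_poly (Sf v)) {..x}}"
    using cnt_usc[of "\<lambda>m. char_poly (Sf (vs m))" p "char_poly (Sf l)" k x]
      degree_monic_char_poly[OF car] pc h unfolding pconv_def by auto
qed

lemma cnt_meas_borel:
  fixes Sf :: "(int \<Rightarrow> real) \<Rightarrow> real mat"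
  assumes car: "\<And>v. Sf v \<in> carrier_mat p p"
    and cont: "\<And>vs v i j. (\<And>k. (\<lambda>m. vs m k) \<longlonglongrightarrow> v k) \<Longrightarrow> i < p \<Longrightarrow> j < p \<Longrightarrow>
                 (\<lambda>m. Sf (vs m) $$ (i,j)) \<longlonglongrightarrow> Sf v $$ (i,j)"
    and B: "B \<in> sets borel"
  shows "(\<lambda>v. real (cnt (char_poly (Sf v)) B)) \<in> borel_measurable borel"
proof (rule cnt_measurable_all[OF _ _ B])
  fix v show "char_poly (Sf v) \<noteq> 0"
    using degree_monic_char_poly[OF car[of v]] by auto
next
  fix x
  let ?f = "\<lambda>v. cnt (char_poly (Sf v)) {..x}"
  have "?f \<in> borel \<rightarrow>\<^sub>M count_space UNIV"
    unfolding measurable_count_space_eq2_countable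
  proof (intro conjI ballI)
    show "?f \<in> space borel \<rightarrow> UNIV" by simp
    fix a :: nat
    have "?f -` {a} \<inter> space borel = {v. a \<le> ?f v} - {v. Suc a \<le> ?f v}" by auto
    also have "\<dots> \<in> sets borel"
      by (intro sets.Diff borel_closed cnt_closed[OF car cont]) auto
    finally show "?f -` {a} \<inter> space borel \<in> sets borel" .
  qed
  then show "(\<lambda>v. real (?f v)) \<in> borel_measurable borel"
    by (rule measurable_compose) simp
qed

definition SH :: "nat \<Rightarrow> nat \<Rightarrow> (int \<Rightarrow> real) \<Rightarrow> real mat" where
  "SH p n v = (let A = link_matrix p n link_H v in A * transpose_mat A)"

lemma SH_carrier: "SH p n v \<in> carrier_mat p p"
  unfolding SH_def Let_def using link_matrix_carrier[of p n link_H v] by (metis mult_carrier_mat transpose_carrier_mat)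

lemma SH_index: "i < p \<Longrightarrow> j < p \<Longrightarrow>
   SH p n v $$ (i,j) = (\<Sum>l<n. v (link_H n (i+1) (l+1)) * v (link_H n (j+1) (l+1)))"
  unfolding SH_def Let_def by (simp add: AAt_index[OF link_matrix_carrier] link_matrix_index)

lemma SH_cont:
  assumes "\<And>k. (\<lambda>m. vs m k) \<longlonglongrightarrow> v k" "i < p" "j < p"
  shows "(\<lambda>m. SH p n (vs m) $$ (i,j)) \<longlonglongrightarrow> SH p n v $$ (i,j)"
  using assms by (simp add: SH_index) (intro tendsto_intros assms)

lemma G_meas:
  assumes "B \<in> sets borel"
  shows "(\<lambda>v. ennreal (real (cnt (char_poly (SH p n v)) B) / real p)) \<in> borel_measurable borel"
proof -
  have "(\<lambda>v. real (cnt (char_poly (SH p n v)) B)) \<in> borel_measurable borel"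
    by (rule cnt_meas_borel[OF SH_carrier SH_cont assms])
  then show ?thesis by measurable
qed



lemma EESD_TH:
  fixes M :: "'a measure" and X :: "int \<Rightarrow> 'a \<Rightarrow> real"
  assumes prob: "prob_space M"
    and rv: "\<And>i. X i \<in> borel_measurable M"
    and indep: "prob_space.indep_vars M (\<lambda>_. borel) X UNIV"
    and ident: "\<And>i. distr M borel (X i) = distr M borel (X 0)"
  shows "EESD M (\<lambda>\<omega>. let A = link_matrix p n link_T (\<lambda>i. X i \<omega>) in A * transpose_mat A) p =
         EESD M (\<lambda>\<omega>. let A = link_matrix p n link_H (\<lambda>i. X i \<omega>) in A * transpose_mat A) p"
proof -
  interpret prob_space M by (rule prob)
  define s where "s = int (n+1)"
  define K where "K = {0..int (p+n)}"
  define ext where "ext w = (\<lambda>k. if k \<in> K then w k else (0::real))" for w :: "int \<Rightarrow> real"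
  define \<mu>0 where "\<mu>0 = distr M borel (X 0)"
  have K0: "K \<noteq> {}" by (simp add: K_def)
  have rvK: "random_variable borel (X i)" for i using rv by simp
  have pmu0: "prob_space \<mu>0" unfolding \<mu>0_def by (rule prob_space_distr[OF rv])
  have win: "distr M (\<Pi>\<^sub>M i\<in>J. borel) (\<lambda>\<omega>. \<lambda>i\<in>J. X i \<omega>) = (\<Pi>\<^sub>M i\<in>J. \<mu>0)"
    if "J \<noteq> {}" for J
  proof -
    have "indep_vars (\<lambda>_. borel) X J" using indep_vars_subset[OF indep] by auto
    then have "distr M (\<Pi>\<^sub>M i\<in>J. borel) (\<lambda>\<omega>. \<lambda>i\<in>J. X i \<omega>) = (\<Pi>\<^sub>M i\<in>J. distr M borel (X i))"
      using indep_vars_iff_distr_eq_PiM[where I=J and M'="\<lambda>_. borel" and X=X] that rvK by simp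
    also have "\<dots> = (\<Pi>\<^sub>M i\<in>J. \<mu>0)" using ident by (intro PiM_cong) (auto simp: \<mu>0_def)
    finally show ?thesis .
  qed
  define K' where "K' = (\<lambda>k. k - s) ` K"
  have K'0: "K' \<noteq> {}" using K0 by (simp add: K'_def)
  have resmeas: "(\<lambda>\<omega>. \<lambda>i\<in>J. Y i \<omega>) \<in> M \<rightarrow>\<^sub>M (\<Pi>\<^sub>M i\<in>J. borel)" if "\<And>i. Y i \<in> borel_measurable M" for J Y
    by (rule measurable_restrict) (use that in auto)
  have reidx: "(\<lambda>w. \<lambda>k\<in>K. w (k - s)) \<in> (\<Pi>\<^sub>M i\<in>K'. (borel :: real measure)) \<rightarrow>\<^sub>M (\<Pi>\<^sub>M i\<in>K. borel)"
    by (rule measurable_restrict) (auto simp: K'_def intro!: measurable_component_singleton)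
  have DT: "distr M (\<Pi>\<^sub>M i\<in>K. borel) (\<lambda>\<omega>. \<lambda>k\<in>K. X (k - s) \<omega>) = (\<Pi>\<^sub>M i\<in>K. \<mu>0)"
  proof -
    have "distr M (\<Pi>\<^sub>M i\<in>K. borel) (\<lambda>\<omega>. \<lambda>k\<in>K. X (k - s) \<omega>) =
          distr M (\<Pi>\<^sub>M i\<in>K. borel) ((\<lambda>w. \<lambda>k\<in>K. w (k - s)) \<circ> (\<lambda>\<omega>. \<lambda>i\<in>K'. X i \<omega>))"
      by (intro distr_cong) (auto simp: K'_def restrict_def fun_eq_iff)
    also have "\<dots> = distr (distr M (\<Pi>\<^sub>M i\<in>K'. borel) (\<lambda>\<omega>. \<lambda>i\<in>K'. X i \<omega>)) (\<Pi>\<^sub>M i\<in>K. borel) (\<lambda>w. \<lambda>k\<in>K. w (k - s))"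
      by (rule distr_distr[symmetric, OF reidx resmeas[OF rv]])
    also have "\<dots> = distr (\<Pi>\<^sub>M i\<in>K'. \<mu>0) (\<Pi>\<^sub>M i\<in>K. \<mu>0) (\<lambda>w. \<lambda>k\<in>K. w (k - s))"
      unfolding win[OF K'0] by (intro distr_cong sets_PiM_cong) (auto simp: \<mu>0_def)
    also have "\<dots> = (\<Pi>\<^sub>M i\<in>K. \<mu>0)"
      using distr_PiM_reindex[of K' "\<lambda>_. \<mu>0" "\<lambda>k. k - s" K] pmu0
      by (auto simp: K'_def inj_on_def)
    finally show ?thesis .
  qed
  have DH: "distr M (\<Pi>\<^sub>M i\<in>K. borel) (\<lambda>\<omega>. \<lambda>k\<in>K. X k \<omega>) = (\<Pi>\<^sub>M i\<in>K. \<mu>0)"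
    by (rule win[OF K0])
  have extm: "ext \<in> (\<Pi>\<^sub>M i\<in>K. (borel :: real measure)) \<rightarrow>\<^sub>M borel"
  proof (rule measurable_coordinatewise_then_product)
    fix k show "(\<lambda>w. ext w k) \<in> borel_measurable (\<Pi>\<^sub>M i\<in>K. borel)"
      by (cases "k \<in> K") (auto simp: ext_def intro!: measurable_component_singleton)
  qed
  have lm_ext: "link_matrix p n link_H (ext v) = link_matrix p n link_H v" for v
    by (rule eq_matI) (auto simp: link_matrix_def link_H_def ext_def K_def)
  show ?thesis
    unfolding EESD_def
  proof (rule measure_of_eq)
    show "sets borel \<subseteq> Pow UNIV" by simp
    fix B :: "real set" assume "B \<in> sigma_sets UNIV (sets borel)"
    then have B: "B \<in> sets borel" by (metis sets.sigma_sets_eq space_borel)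
    define G where "G v = ennreal (real (cnt (char_poly (SH p n v)) B) / real p)" for v
    have Gm: "G \<in> borel_measurable borel" unfolding G_def by (rule G_meas[OF B])
    have Gext: "G (ext v) = G v" for v by (simp add: G_def SH_def lm_ext)
    have Gm': "(\<lambda>w. G (ext w)) \<in> borel_measurable (\<Pi>\<^sub>M i\<in>K. borel)"
      using measurable_compose[OF extm Gm] by (simp add: o_def)
    have int_eq: "(\<integral>\<^sup>+\<omega>. G (ext (\<lambda>k\<in>K. Y k \<omega>)) \<partial>M) = integral\<^sup>N (distr M (\<Pi>\<^sub>M i\<in>K. borel) (\<lambda>\<omega>. \<lambda>k\<in>K. Y k \<omega>)) (\<lambda>w. G (ext w))"
      if "\<And>i. Y i \<in> borel_measurable M" for Y
    proof (rule nn_integral_distr[symmetric])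
      show "(\<lambda>\<omega>. \<lambda>k\<in>K. Y k \<omega>) \<in> M \<rightarrow>\<^sub>M (\<Pi>\<^sub>M i\<in>K. borel)" by (rule resmeas[of Y K, OF that])
      show "(\<lambda>w. G (ext w)) \<in> borel_measurable (distr M (\<Pi>\<^sub>M i\<in>K. borel) (\<lambda>\<omega>. \<lambda>k\<in>K. Y k \<omega>))"
        using Gm' by simp
    qed
    have extr: "ext (\<lambda>k\<in>K. f k) = ext f" for f by (auto simp: ext_def fun_eq_iff)
    have "(\<integral>\<^sup>+\<omega>. ennreal (real (eig_count (let A = link_matrix p n link_T (\<lambda>i. X i \<omega>) in A * transpose_mat A) B) / real p) \<partial>M)
        = (\<integral>\<^sup>+\<omega>. G (ext (\<lambda>k\<in>K. X (k - s) \<omega>)) \<partial>M)"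
      by (intro nn_integral_cong) (simp only: extr Gext, simp add: G_def eig_count_def cnt_def SH_def TH_eq s_def)
    also have "\<dots> = integral\<^sup>N (\<Pi>\<^sub>M i\<in>K. \<mu>0) (\<lambda>w. G (ext w))"
      using int_eq[of "\<lambda>k. X (k - s)"] rv DT by simp
    also have "\<dots> = (\<integral>\<^sup>+\<omega>. G (ext (\<lambda>k\<in>K. X k \<omega>)) \<partial>M)"
      using int_eq[of X] rv DH by simp
    also have "\<dots> = (\<integral>\<^sup>+\<omega>. ennreal (real (eig_count (let A = link_matrix p n link_H (\<lambda>i. X i \<omega>) in A * transpose_mat A) B) / real p) \<partial>M)"
      by (intro nn_integral_cong) (simp only: extr Gext, simp add: G_def eig_count_def cnt_def SH_def)
    finally show "(\<integral>\<^sup>+\<omega>. ennreal (real (eig_count (let A = link_matrix p n link_T (\<lambda>i. X i \<omega>) in A * transpose_mat A) B) / real p) \<partial>M)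
        = (\<integral>\<^sup>+\<omega>. ennreal (real (eig_count (let A = link_matrix p n link_H (\<lambda>i. X i \<omega>) in A * transpose_mat A) B) / real p) \<partial>M)" .
  qed
qed


theorem mainTheorem14:
  fixes M :: "nat \<Rightarrow> 'a measure"
    and X :: "nat \<Rightarrow> int \<Rightarrow> 'a \<Rightarrow> real"
    and p :: "nat \<Rightarrow> nat"
    and y :: real
    and C :: "nat \<Rightarrow> real"
    and \<mu>T \<mu>H \<mu>R \<mu>C :: "real measure"
  assumes ratio: "(\<lambda>n. real (p n) / real n) \<longlonglongrightarrow> y" and ypos: "y > 0"
    and prob: "\<And>n. prob_space (M n)"
    and rv: "\<And>n i. X n i \<in> borel_measurable (M n)"
    and indep: "\<And>n. prob_space.indep_vars (M n) (\<lambda>_. borel) (X n) UNIV"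
    and ident: "\<And>n i. distr (M n) borel (X n i) = distr (M n) borel (X n 0)"
    and moments: "\<And>n k. integrable (M n) (\<lambda>\<omega>. X n 0 \<omega> ^ k)"
    and lim: "\<And>k. k \<ge> 1 \<Longrightarrow>
                (\<lambda>n. real n * (\<integral>\<omega>. X n 0 \<omega> ^ k \<partial>M n)) \<longlonglongrightarrow> C k"
    and carleman: "carleman_diverges (alpha C)"
    and distT: "real_distribution \<mu>T" and convT: "weak_conv_m (link_EESD M X p link_T) \<mu>T"
    and distH: "real_distribution \<mu>H" and convH: "weak_conv_m (link_EESD M X p link_H) \<mu>H"
    and distR: "real_distribution \<mu>R" and convR: "weak_conv_m (link_EESD M X p link_R) \<mu>R"
    and distC: "real_distribution \<mu>C" and convC: "weak_conv_m (link_EESD M X p link_C) \<mu>C"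
  shows "\<mu>T = \<mu>H \<and> \<mu>R = \<mu>C"
proof -
  have TH: "link_EESD M X p link_T = link_EESD M X p link_H"
  proof (rule ext)
    fix n show "link_EESD M X p link_T n = link_EESD M X p link_H n"
      unfolding link_EESD_def by (rule EESD_TH[OF prob rv indep ident])
  qed
  have RC: "link_EESD M X p link_R = link_EESD M X p link_C"
  proof (rule ext)
    fix n show "link_EESD M X p link_R n = link_EESD M X p link_C n"
      unfolding link_EESD_def EESD_def eig_count_def by (simp only: RC_eq)
  qed
  have "\<mu>T = \<mu>H" using weak_conv_unique[OF distT distH convT] convH TH by simp
  moreover have "\<mu>R = \<mu>C" using weak_conv_unique[OF distR distC convR] convC RC by simp
  ultimately show ?thesis by simp
qed

end
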